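(* Let $d,K\in\mathbb{N}$, $\mathbb{T}^d=(\mathbb{R}/\mathbb{Z})^d$, $E:\mathbb{T}^d\to\mathbb{R}^d$ of class $\mathcal{C}^\infty$, and $\sigma_1,\ldots,\sigma_K:\mathbb{T}^d\times\mathbb{R}^d\to\mathbb{R}$ bounded and of class $\mathcal{C}^\infty$. Let $f_0$ be non-random, $\tau\in(0,1)$, $t_n=n\tau$, $\delta\beta_{n,k}=\beta_k(t_{n+1})-\beta_k(t_n)$. Define $f_0^{\rm mI}=f_0$ and for $n\ge0$ $$\hat f_{n+1}^{\rm mI}=S^2(\tau)S^1(\tau)f_n^{\rm mI},\qquad f_{n+1}^{\rm mI}(x,v)=\exp\Big(\sum_{k=1}^K\sigma_k(x,v)\delta\beta_{n,k}-\frac{\tau}{2}\sum_{k=1}^K\sigma_k(x,v)^2\Big)\hat f_{n+1}^{\rm mI}(x,v),$$ where $S^1(\tau)f(x,v)=f(x-\tau v,v)$ and $S^2(\tau)f(x,v)=f(x,v-\tau E(x))$. Then: (i) (Positivity) If $f_0\ge0$ on $\mathbb{T}^d\times\mathbb{R}^d$, then for any $\tau\in(0,1)$, $f_n^{\rm mI}(x,v)\ge0$ almost surely for all $n\ge0$ and all $(x,v)$. (ii) (Expected mass) If $f_0\in L^1_{x,v}$, then almost surely $f_n^{\rm mI}\in L^1_{x,v}$ for all $n\ge0$, and $\iint\mathbb{E}[f_n^{\rm mI}(x,v)]\,\mathrm{d}x\,\mathrm{d}v=\iint f_0(x,v)\,\mathrm{d}x\,\mathrm{d}v$. (iii) ($L^2$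 norm) If $f_0\in L^2_{x,v}$ and there is a real $\sigma$ with $\sum_{k=1}^K\sigma_k(x,v)^2=\sigma^2$ for all $(x,v)$, then $f_n^{\rm mI}\in L^2(\Omega,L^2_{x,v})$ for all $n\ge0$ and $\mathbb{E}[\|f_n^{\rm mI}\|_{L^2_{x,v}}^2]=e^{\sigma^2t_n}\|f_0\|_{L^2_{x,v}}^2$.
   Context: $\beta_1,\ldots,\beta_K$ are independent standard real-valued Wiener processes on a filtered probability space. $L^p_{x,v}=L^p(\mathbb{T}^d\times\mathbb{R}^d)$ for Lebesgue measure; integrals $\iint$ are over $\mathbb{T}^d\times\mathbb{R}^d$. *)

theory Defs
  imports "HOL-Probability.Probability"
begin

text \<open>Functions on the torus T^d are represented as functions on R^d that are
  Z^d-periodic; d is the cardinality of the finite index type 'd.\<close>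

definition int_vec :: "real^'d \<Rightarrow> bool" where
  "int_vec z \<longleftrightarrow> (\<forall>i. z $ i \<in> \<int>)"

definition periodic_torus :: "(real^'d \<Rightarrow> 'b) \<Rightarrow> bool" where
  "periodic_torus g \<longleftrightarrow> (\<forall>x z. int_vec z \<longrightarrow> g (x + z) = g x)"

definition periodic_x :: "((real^'d) \<times> (real^'d) \<Rightarrow> 'b) \<Rightarrow> bool" where
  "periodic_x g \<longleftrightarrow> (\<forall>x v z. int_vec z \<longrightarrow> g (x + z, v) = g (x, v))"

text \<open>Fundamental domain [0,1)^d x R^d of T^d x R^d (Lebesgue measure).\<close>
definition phase_dom :: "((real^'d) \<times> (real^'d)) set" where
  "phase_dom = {x. \<forall>i. 0 \<le> x $ i \<and> x $ i < 1} \<times> UNIV"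

text \<open>C^infinity: D vs is the iterated partial derivative along the basis
  directions listed in vs; every such derivative exists (Frechet) everywhere.\<close>
definition smooth_map :: "('a::euclidean_space \<Rightarrow> 'b::real_normed_vector) \<Rightarrow> bool" where
  "smooth_map f \<longleftrightarrow> (\<exists>D :: 'a list \<Rightarrow> 'a \<Rightarrow> 'b. D [] = f \<and>
     (\<forall>vs x. (D vs has_derivative (\<lambda>h. \<Sum>i\<in>Basis. (h \<bullet> i) *\<^sub>R D (i # vs) x)) (at x)))"

definition indep_wiener :: "'w measure \<Rightarrow> nat \<Rightarrow> (nat \<Rightarrow> real \<Rightarrow> 'w \<Rightarrow> real) \<Rightarrow> bool" where
  "indep_wiener M K \<beta> \<longleftrightarrow> prob_space M \<and>
     (\<forall>k<K. \<forall>t\<ge>0. \<beta> k t \<in> borel_measurable M) \<and>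
     (\<forall>k<K. AE \<omega> in M. \<beta> k 0 \<omega> = 0) \<and>
     (\<forall>k<K. AE \<omega> in M. continuous_on {0..} (\<lambda>t. \<beta> k t \<omega>)) \<and>
     (\<forall>(n::nat) (ts::nat \<Rightarrow> real). 0 \<le> ts 0 \<longrightarrow> (\<forall>i<n. ts i < ts (Suc i)) \<longrightarrow>
        prob_space.indep_vars M (\<lambda>_. borel)
          (\<lambda>(k, i) \<omega>. \<beta> k (ts (Suc i)) \<omega> - \<beta> k (ts i) \<omega>) ({..<K} \<times> {..<n}) \<and>
        (\<forall>k<K. \<forall>i<n. distributed M lborel (\<lambda>\<omega>. \<beta> k (ts (Suc i)) \<omega> - \<beta> k (ts i) \<omega>)
            (\<lambda>y. ennreal (normal_density 0 (sqrt (ts (Suc i) - ts i)) y))))"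

definition S1 :: "real \<Rightarrow> ((real^'d) \<times> (real^'d) \<Rightarrow> real) \<Rightarrow> (real^'d) \<times> (real^'d) \<Rightarrow> real" where
  "S1 \<tau> f = (\<lambda>(x, v). f (x - \<tau> *\<^sub>R v, v))"

definition S2 :: "real \<Rightarrow> (real^'d \<Rightarrow> real^'d) \<Rightarrow> ((real^'d) \<times> (real^'d) \<Rightarrow> real) \<Rightarrow> (real^'d) \<times> (real^'d) \<Rightarrow> real" where
  "S2 \<tau> E f = (\<lambda>(x, v). f (x, v - \<tau> *\<^sub>R E x))"

text \<open>The modified integrator f_n^{mI}; indices k = 0..K-1 stand for 1..K.\<close>
fun fmI :: "real \<Rightarrow> (real^'d \<Rightarrow> real^'d) \<Rightarrow> nat \<Rightarrow> (nat \<Rightarrow> (real^'d) \<times> (real^'d) \<Rightarrow> real)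
     \<Rightarrow> (nat \<Rightarrow> real \<Rightarrow> 'w \<Rightarrow> real) \<Rightarrow> ((real^'d) \<times> (real^'d) \<Rightarrow> real)
     \<Rightarrow> nat \<Rightarrow> 'w \<Rightarrow> (real^'d) \<times> (real^'d) \<Rightarrow> real" where
  "fmI \<tau> E K \<sigma> \<beta> f0 0 \<omega> = f0"
| "fmI \<tau> E K \<sigma> \<beta> f0 (Suc n) \<omega> = (\<lambda>z.
     exp ((\<Sum>k<K. \<sigma> k z * (\<beta> k (real (Suc n) * \<tau>) \<omega> - \<beta> k (real n * \<tau>) \<omega>))
          - \<tau> / 2 * (\<Sum>k<K. (\<sigma> k z)\<^sup>2))
     * S2 \<tau> E (S1 \<tau> (fmI \<tau> E K \<sigma> \<beta> f0 n \<omega>)) z)"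

end

theory Submission
  imports Defs
begin


definition Qc :: "(real^'d) set" where "Qc = {x. \<forall>i. 0 \<le> x $ i \<and> x $ i < 1}"

lemma phase_dom_Qc: "phase_dom = Qc \<times> UNIV"
  by (simp add: phase_dom_def Qc_def)

lemma measurable_vec_nth[measurable]: "(\<lambda>x::real^'d. x $ i) \<in> borel_measurable borel"
  by (intro borel_measurable_continuous_onI linear_continuous_on bounded_linear_vec_nth)

lemma Qc_sets[measurable]: "Qc \<in> sets borel"
  unfolding Qc_def by measurable

lemma bm_fst[measurable (raw)]:
  "f \<in> M \<rightarrow>\<^sub>M (borel :: ('a::euclidean_space \<times> 'b::euclidean_space) measure) \<Longrightarrow> (\<lambda>x. fst (f x)) \<in> borel_measurable M"
  by (rule measurable_compose[where f=f]) (auto intro!: borel_measurable_continuous_onI continuous_on_fst continuous_on_id)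

lemma bm_snd[measurable (raw)]:
  "f \<in> M \<rightarrow>\<^sub>M (borel :: ('a::euclidean_space \<times> 'b::euclidean_space) measure) \<Longrightarrow> (\<lambda>x. snd (f x)) \<in> borel_measurable M"
  by (rule measurable_compose[where f=f]) (auto intro!: borel_measurable_continuous_onI continuous_on_snd continuous_on_id)

lemma phase_dom_sets[measurable]: "(phase_dom :: ((real^'d) \<times> (real^'d)) set) \<in> sets borel"
proof -
  have "(phase_dom :: ((real^'d) \<times> (real^'d)) set) = {z \<in> space borel. fst z \<in> Qc}"
    by (auto simp: phase_dom_Qc)
  also have "\<dots> \<in> sets borel" by measurable
  finally show ?thesis .
qed

definition ev :: "'d set \<Rightarrow> real^'d" where "ev S = (\<chi> i. if i \<in> S then 1 else 0)"

lemma int_vec_ev: "int_vec (ev S)"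
  by (simp add: int_vec_def ev_def)

definition piece :: "real^'d \<Rightarrow> 'd set \<Rightarrow> (real^'d) set" where
  "piece r S = {x. \<forall>i. 0 \<le> x $ i \<and> x $ i < 1 \<and> (i \<in> S \<longleftrightarrow> x $ i < r $ i)}"

lemma piece_sets[measurable]: "piece r S \<in> sets borel"
  unfolding piece_def by measurable

lemma piece_iff: "x \<in> piece r S \<longleftrightarrow> x \<in> Qc \<and> S = {i. x $ i < r $ i}"
  unfolding piece_def Qc_def by auto

lemma piece_shift_iff:
  assumes r: "\<And>i. 0 \<le> r $ i \<and> r $ i < 1"
  shows "y + (r - ev S) \<in> piece r S \<longleftrightarrow> y \<in> Qc \<and> S = {i. 1 - r $ i \<le> y $ i}"
proof -
  have "y + (r - ev S) \<in> piece r S \<longleftrightarrow>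
     (\<forall>i. 0 \<le> y$i + r$i - (if i \<in> S then 1 else 0) \<and> y$i + r$i - (if i \<in> S then 1 else 0) < 1
        \<and> (i \<in> S \<longleftrightarrow> y$i + r$i - (if i \<in> S then 1 else 0) < r $ i))"
    apply (simp add: piece_def ev_def) apply (intro iff_allI) by auto
  also have "\<dots> \<longleftrightarrow> (\<forall>i. 0 \<le> y $ i \<and> y $ i < 1 \<and> (i \<in> S \<longleftrightarrow> 1 - r $ i \<le> y $ i))"
  proof (intro iff_allI)
    fix i
    show "(0 \<le> y$i + r$i - (if i \<in> S then 1 else 0) \<and> y$i + r$i - (if i \<in> S then 1 else 0) < 1
        \<and> (i \<in> S \<longleftrightarrow> y$i + r$i - (if i \<in> S then 1 else 0) < r $ i)) \<longleftrightarrow>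
        (0 \<le> y $ i \<and> y $ i < 1 \<and> (i \<in> S \<longleftrightarrow> 1 - r $ i \<le> y $ i))"
      using r[of i] by (cases "i \<in> S") auto
  qed
  also have "\<dots> \<longleftrightarrow> y \<in> Qc \<and> S = {i. 1 - r $ i \<le> y $ i}"
    unfolding Qc_def by auto
  finally show ?thesis .
qed

lemma nn_integral_translate:
  fixes F :: "'a::euclidean_space \<Rightarrow> ennreal"
  assumes [measurable]: "F \<in> borel_measurable borel"
  shows "(\<integral>\<^sup>+x. F (a + x) \<partial>lborel) = (\<integral>\<^sup>+x. F x \<partial>lborel)"
proof -
  have "(\<integral>\<^sup>+x. F x \<partial>lborel) = (\<integral>\<^sup>+x. F x \<partial>distr lborel borel ((+) a))"
    by (simp add: lborel_distr_plus)
  also have "\<dots> = (\<integral>\<^sup>+x. F (a + x) \<partial>lborel)"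
    by (subst nn_integral_distr) auto
  finally show ?thesis by simp
qed

lemma per_shift_nn:
  fixes p :: "real^'d \<Rightarrow> ennreal"
  assumes pm[measurable]: "p \<in> borel_measurable borel"
    and per: "\<And>x m. int_vec m \<Longrightarrow> p (x + m) = p x"
  shows "(\<integral>\<^sup>+x. indicator Qc x * p (x - c) \<partial>lborel) = (\<integral>\<^sup>+x. indicator Qc x * p x \<partial>lborel)"
proof -
  define fl :: "real^'d" where "fl = (\<chi> i. of_int \<lfloor>c $ i\<rfloor>)"
  define r where "r = c - fl"
  have r: "\<And>i. 0 \<le> r $ i \<and> r $ i < 1"
    by (simp add: r_def fl_def) linarith
  have ifl: "int_vec fl" by (simp add: int_vec_def fl_def)
  have p1: "p (x - c) = p (x - r)" for x
    using per[OF ifl, of "x - c"] by (simp add: r_def algebra_simps)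
  have p2: "p (x - r + ev S) = p (x - r)" for x S
    using per[OF int_vec_ev] by simp
  have c1: "indicator Qc x * p (x - r) = (\<Sum>S\<in>UNIV. indicator (piece r S) x * p (x - r + ev S))" for x
  proof -
    have "(\<Sum>S\<in>UNIV. indicator (piece r S) x * p (x - r + ev S)) =
          (\<Sum>S\<in>UNIV. if S = {i. x $ i < r $ i} then indicator Qc x * p (x - r) else 0)"
      by (intro sum.cong refl) (auto simp: indicator_def piece_iff p2)
    also have "\<dots> = indicator Qc x * p (x - r)" by simp
    finally show ?thesis by simp
  qed
  have c3: "(\<Sum>S\<in>UNIV. indicator (piece r S) (y + (r - ev S))) = (indicator Qc y :: ennreal)" for y
  proof -
    have "(\<Sum>S\<in>UNIV. indicator (piece r S) (y + (r - ev S))) =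
          (\<Sum>S\<in>UNIV. if S = {i. 1 - r $ i \<le> y $ i} then indicator Qc y else (0::ennreal))"
      by (intro sum.cong refl) (auto simp: indicator_def piece_shift_iff[OF r])
    also have "\<dots> = indicator Qc y" by simp
    finally show ?thesis .
  qed
  have "(\<integral>\<^sup>+x. indicator Qc x * p (x - c) \<partial>lborel) = (\<integral>\<^sup>+x. (\<Sum>S\<in>UNIV. indicator (piece r S) x * p (x - r + ev S)) \<partial>lborel)"
    by (simp add: p1 c1)
  also have "\<dots> = (\<Sum>S\<in>UNIV. \<integral>\<^sup>+x. indicator (piece r S) x * p (x - r + ev S) \<partial>lborel)"
    by (intro nn_integral_sum) measurable
  also have "\<dots> = (\<Sum>S\<in>UNIV. \<integral>\<^sup>+y. indicator (piece r S) (y + (r - ev S)) * p y \<partial>lborel)"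
  proof (intro sum.cong refl)
    fix S
    have "(\<integral>\<^sup>+y. indicator (piece r S) (y + (r - ev S)) * p y \<partial>lborel) =
       (\<integral>\<^sup>+x. (\<lambda>y. indicator (piece r S) (y + (r - ev S)) * p y) ((ev S - r) + x) \<partial>lborel)"
      by (rule nn_integral_translate[symmetric]) measurable
    also have "\<dots> = (\<integral>\<^sup>+x. indicator (piece r S) x * p (x - r + ev S) \<partial>lborel)"
      by (simp add: algebra_simps)
    finally show "(\<integral>\<^sup>+x. indicator (piece r S) x * p (x - r + ev S) \<partial>lborel) = (\<integral>\<^sup>+y. indicator (piece r S) (y + (r - ev S)) * p y \<partial>lborel)"
      by simp
  qed
  also have "\<dots> = (\<integral>\<^sup>+y. (\<Sum>S\<in>UNIV. indicator (piece r S) (y + (r - ev S)) * p y) \<partial>lborel)"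
    by (intro nn_integral_sum[symmetric]) measurable
  also have "\<dots> = (\<integral>\<^sup>+y. indicator Qc y * p y \<partial>lborel)"
    by (simp add: sum_distrib_right[symmetric] c3)
  finally show ?thesis .
qed



lemma nn_integral_pair_fst:
  fixes F :: "('a::euclidean_space \<times> 'b::euclidean_space) \<Rightarrow> ennreal"
  assumes [measurable]: "F \<in> borel_measurable borel"
  shows "(\<integral>\<^sup>+z. F z \<partial>lborel) = (\<integral>\<^sup>+x. \<integral>\<^sup>+v. F (x, v) \<partial>lborel \<partial>lborel)"
proof -
  have m: "F \<in> borel_measurable (lborel \<Otimes>\<^sub>M lborel)" by (simp add: lborel_prod)
  have "(\<integral>\<^sup>+z. F z \<partial>lborel) = (\<integral>\<^sup>+z. F z \<partial>(lborel \<Otimes>\<^sub>M lborel))" by (simp add: lborel_prod)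
  also have "\<dots> = (\<integral>\<^sup>+x. \<integral>\<^sup>+v. F (x, v) \<partial>lborel \<partial>lborel)"
    by (rule lborel.nn_integral_fst[OF m, symmetric])
  finally show ?thesis .
qed

lemma nn_integral_pair_snd:
  fixes F :: "('a::euclidean_space \<times> 'b::euclidean_space) \<Rightarrow> ennreal"
  assumes [measurable]: "F \<in> borel_measurable borel"
  shows "(\<integral>\<^sup>+z. F z \<partial>lborel) = (\<integral>\<^sup>+v. \<integral>\<^sup>+x. F (x, v) \<partial>lborel \<partial>lborel)"
proof -
  have m: "F \<in> borel_measurable (lborel \<Otimes>\<^sub>M lborel)" by (simp add: lborel_prod)
  have "(\<integral>\<^sup>+z. F z \<partial>lborel) = (\<integral>\<^sup>+z. F z \<partial>(lborel \<Otimes>\<^sub>M lborel))" by (simp add: lborel_prod)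
  also have "\<dots> = (\<integral>\<^sup>+v. \<integral>\<^sup>+x. F (x, v) \<partial>lborel \<partial>lborel)"
    by (rule lborel_pair.nn_integral_snd[OF m, symmetric])
  finally show ?thesis .
qed

lemma shB_nn:
  fixes h :: "(real^'d) \<times> (real^'d) \<Rightarrow> ennreal"
  assumes hm[measurable]: "h \<in> borel_measurable borel" and per: "periodic_x h"
  shows "(\<integral>\<^sup>+z. indicator phase_dom z * h (fst z - t *\<^sub>R snd z, snd z) \<partial>lborel)
       = (\<integral>\<^sup>+z. indicator phase_dom z * h z \<partial>lborel)"
proof -
  have ind: "indicator phase_dom (x, v) = (indicator Qc x :: ennreal)" for x v
    by (simp add: phase_dom_Qc indicator_def)
  have "(\<integral>\<^sup>+z. indicator phase_dom z * h (fst z - t *\<^sub>R snd z, snd z) \<partial>lborel)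
     = (\<integral>\<^sup>+v. \<integral>\<^sup>+x. indicator Qc x * h (x - t *\<^sub>R v, v) \<partial>lborel \<partial>lborel)"
    by (subst nn_integral_pair_snd) (auto simp: ind)
  also have "\<dots> = (\<integral>\<^sup>+v. \<integral>\<^sup>+x. indicator Qc x * h (x, v) \<partial>lborel \<partial>lborel)"
  proof -
    have eq: "(\<integral>\<^sup>+x. indicator Qc x * h (x - t *\<^sub>R v, v) \<partial>lborel) = (\<integral>\<^sup>+x. indicator Qc x * h (x, v) \<partial>lborel)" for v :: "real^'d"
      using per_shift_nn[where p="\<lambda>x. h (x, v)" and c="t *\<^sub>R v"] per by (auto simp: periodic_x_def)
    show ?thesis by (simp add: eq)
  qed
  also have "\<dots> = (\<integral>\<^sup>+z. indicator phase_dom z * h z \<partial>lborel)"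
    by (subst nn_integral_pair_snd) (auto simp: ind)
  finally show ?thesis .
qed

lemma shA_nn:
  fixes h :: "(real^'d) \<times> (real^'d) \<Rightarrow> ennreal" and E :: "real^'d \<Rightarrow> real^'d"
  assumes hm[measurable]: "h \<in> borel_measurable borel" and Em[measurable]: "E \<in> borel_measurable borel"
  shows "(\<integral>\<^sup>+z. indicator phase_dom z * h (fst z, snd z - t *\<^sub>R E (fst z)) \<partial>lborel)
       = (\<integral>\<^sup>+z. indicator phase_dom z * h z \<partial>lborel)"
proof -
  have ind: "indicator phase_dom (x, v) = (indicator Qc x :: ennreal)" for x v
    by (simp add: phase_dom_Qc indicator_def)
  have "(\<integral>\<^sup>+z. indicator phase_dom z * h (fst z, snd z - t *\<^sub>R E (fst z)) \<partial>lborel)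
     = (\<integral>\<^sup>+x. \<integral>\<^sup>+v. indicator Qc x * h (x, v - t *\<^sub>R E x) \<partial>lborel \<partial>lborel)"
    by (subst nn_integral_pair_fst) (auto simp: ind)
  also have "\<dots> = (\<integral>\<^sup>+x. \<integral>\<^sup>+v. indicator Qc x * h (x, v) \<partial>lborel \<partial>lborel)"
  proof -
    have eq: "(\<integral>\<^sup>+v. indicator Qc x * h (x, v - t *\<^sub>R E x) \<partial>lborel) = (\<integral>\<^sup>+v. indicator Qc x * h (x, v) \<partial>lborel)" for x
    proof -
    have "(\<integral>\<^sup>+v. (\<lambda>v. indicator Qc x * h (x, v)) (- (t *\<^sub>R E x) + v) \<partial>lborel) = (\<integral>\<^sup>+v. indicator Qc x * h (x, v) \<partial>lborel)"
      using nn_integral_translate[of "\<lambda>v. indicator Qc x * h (x, v)" "- (t *\<^sub>R E x)"] by simp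
    then show ?thesis
      by (simp add: algebra_simps)
    qed
    show ?thesis by (simp add: eq)
  qed
  also have "\<dots> = (\<integral>\<^sup>+z. indicator phase_dom z * h z \<partial>lborel)"
    by (subst nn_integral_pair_fst) (auto simp: ind)
  finally show ?thesis .
qed

definition Phi :: "real \<Rightarrow> (real^'d \<Rightarrow> real^'d) \<Rightarrow> (real^'d) \<times> (real^'d) \<Rightarrow> (real^'d) \<times> (real^'d)" where
  "Phi t E z = (fst z - t *\<^sub>R (snd z - t *\<^sub>R E (fst z)), snd z - t *\<^sub>R E (fst z))"

lemma Phi_measurable[measurable]:
  assumes [measurable]: "E \<in> borel_measurable borel"
  shows "Phi t E \<in> borel_measurable borel"
  unfolding Phi_def by measurable

lemma Phi_nn:
  fixes h :: "(real^'d) \<times> (real^'d) \<Rightarrow> ennreal"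
  assumes hm[measurable]: "h \<in> borel_measurable borel" and per: "periodic_x h"
    and Em[measurable]: "E \<in> borel_measurable borel"
  shows "(\<integral>\<^sup>+z. indicator phase_dom z * h (Phi t E z) \<partial>lborel) = (\<integral>\<^sup>+z. indicator phase_dom z * h z \<partial>lborel)"
proof -
  let ?hB = "\<lambda>z. h (fst z - t *\<^sub>R snd z, snd z)"
  have [measurable]: "?hB \<in> borel_measurable borel" by measurable
  have "(\<integral>\<^sup>+z. indicator phase_dom z * h (Phi t E z) \<partial>lborel)
     = (\<integral>\<^sup>+z. indicator phase_dom z * ?hB (fst z, snd z - t *\<^sub>R E (fst z)) \<partial>lborel)"
    by (simp add: Phi_def)
  also have "\<dots> = (\<integral>\<^sup>+z. indicator phase_dom z * ?hB z \<partial>lborel)"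
    by (rule shA_nn) measurable
  also have "\<dots> = (\<integral>\<^sup>+z. indicator phase_dom z * h z \<partial>lborel)"
    by (rule shB_nn[OF hm per])
  finally show ?thesis .
qed

lemma Phi_periodic:
  fixes E :: "real^'d \<Rightarrow> real^'d"
  assumes "periodic_torus E" "periodic_x h"
  shows "periodic_x (\<lambda>z. h (Phi t E z))"
  unfolding periodic_x_def
proof (intro allI impI)
  fix x v z :: "real^'d" assume z: "int_vec z"
  have "E (x + z) = E x" using assms(1) z by (simp add: periodic_torus_def)
  then have "Phi t E (x + z, v) = (fst (Phi t E (x, v)) + z, snd (Phi t E (x, v)))"
    by (simp add: Phi_def algebra_simps)
  then show "h (Phi t E (x + z, v)) = h (Phi t E (x, v))"
    using assms(2) z by (simp add: periodic_x_def)
qed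

lemma Phi_pow_periodic:
  fixes E :: "real^'d \<Rightarrow> real^'d"
  assumes "periodic_torus E" "periodic_x h"
  shows "periodic_x (\<lambda>z. h ((Phi t E ^^ n) z))"
proof (induction n)
  case 0 then show ?case using assms(2) by simp
next
  case (Suc n)
  have "periodic_x (\<lambda>z. (\<lambda>z. h ((Phi t E ^^ n) z)) (Phi t E z))"
    by (rule Phi_periodic[OF assms(1) Suc])
  then show ?case by (simp add: funpow_Suc_right del: funpow.simps)
qed

lemma Phi_pow_measurable[measurable]:
  assumes [measurable]: "E \<in> borel_measurable borel"
  shows "(Phi t E ^^ n) \<in> borel_measurable borel"
  by (induction n) (auto simp: measurable_ident)

lemma Phi_pow_nn:
  fixes h :: "(real^'d) \<times> (real^'d) \<Rightarrow> ennreal"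
  assumes hm[measurable]: "h \<in> borel_measurable borel" and per: "periodic_x h"
    and Em[measurable]: "E \<in> borel_measurable borel" and Ep: "periodic_torus E"
  shows "(\<integral>\<^sup>+z. indicator phase_dom z * h ((Phi t E ^^ n) z) \<partial>lborel) = (\<integral>\<^sup>+z. indicator phase_dom z * h z \<partial>lborel)"
proof (induction n)
  case 0 then show ?case by simp
next
  case (Suc n)
  have "(\<integral>\<^sup>+z. indicator phase_dom z * h ((Phi t E ^^ Suc n) z) \<partial>lborel)
    = (\<integral>\<^sup>+z. indicator phase_dom z * (\<lambda>z. h ((Phi t E ^^ n) z)) (Phi t E z) \<partial>lborel)"
    by (simp add: funpow_Suc_right del: funpow.simps)
  also have "\<dots> = (\<integral>\<^sup>+z. indicator phase_dom z * h ((Phi t E ^^ n) z) \<partial>lborel)"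
    by (rule Phi_nn[OF _ Phi_pow_periodic[OF Ep per] Em]) measurable
  finally show ?case using Suc by simp
qed



lemma ennreal_norm_ind: "ennreal (norm (indicator A z *\<^sub>R (f::real))) = indicator A z * ennreal \<bar>f\<bar>"
  by (simp split: split_indicator)

lemma ennreal_ind: "ennreal (indicator A z *\<^sub>R (f::real)) = indicator A z * ennreal f"
  by (simp split: split_indicator)

lemma ennreal_neg_ind: "ennreal (- (indicator A z *\<^sub>R (f::real))) = indicator A z * ennreal (- f)"
  by (simp split: split_indicator)

lemma Phi_pow_int:
  fixes g :: "(real^'d) \<times> (real^'d) \<Rightarrow> real" and E :: "real^'d \<Rightarrow> real^'d"
  assumes gm[measurable]: "g \<in> borel_measurable borel" and per: "periodic_x g"
    and Em[measurable]: "E \<in> borel_measurable borel" and Ep: "periodic_torus E"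
    and gi: "set_integrable lborel phase_dom g"
  shows "set_integrable lborel phase_dom (\<lambda>z. g ((Phi t E ^^ n) z))"
    and "(LINT z:phase_dom|lborel. g ((Phi t E ^^ n) z)) = (LINT z:phase_dom|lborel. g z)"
proof -
  have pa: "periodic_x (\<lambda>z. ennreal \<bar>g z\<bar>)" "periodic_x (\<lambda>z. ennreal (g z))" "periodic_x (\<lambda>z. ennreal (- g z))"
    using per by (auto simp: periodic_x_def)
  have "(\<integral>\<^sup>+z. ennreal (norm (indicator phase_dom z *\<^sub>R g ((Phi t E ^^ n) z))) \<partial>lborel)
      = (\<integral>\<^sup>+z. indicator phase_dom z * (\<lambda>z. ennreal \<bar>g z\<bar>) ((Phi t E ^^ n) z) \<partial>lborel)"
    by (simp only: ennreal_norm_ind)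
  also have "\<dots> = (\<integral>\<^sup>+z. indicator phase_dom z * ennreal \<bar>g z\<bar> \<partial>lborel)"
    by (rule Phi_pow_nn[OF _ pa(1) Em Ep]) measurable
  also have "\<dots> = (\<integral>\<^sup>+z. ennreal (norm (indicator phase_dom z *\<^sub>R g z)) \<partial>lborel)"
    by (simp only: ennreal_norm_ind)
  also have "\<dots> < \<infinity>" using gi unfolding set_integrable_def integrable_iff_bounded by simp
  finally show int: "set_integrable lborel phase_dom (\<lambda>z. g ((Phi t E ^^ n) z))"
    unfolding set_integrable_def integrable_iff_bounded by simp
  have e1: "(\<integral>\<^sup>+z. ennreal (indicator phase_dom z *\<^sub>R g ((Phi t E ^^ n) z)) \<partial>lborel)
      = (\<integral>\<^sup>+z. ennreal (indicator phase_dom z *\<^sub>R g z) \<partial>lborel)"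
    unfolding ennreal_ind by (rule Phi_pow_nn[OF _ pa(2) Em Ep, where t=t and n=n]) measurable
  have e2: "(\<integral>\<^sup>+z. ennreal (- (indicator phase_dom z *\<^sub>R g ((Phi t E ^^ n) z))) \<partial>lborel)
      = (\<integral>\<^sup>+z. ennreal (- (indicator phase_dom z *\<^sub>R g z)) \<partial>lborel)"
    unfolding ennreal_neg_ind by (rule Phi_pow_nn[OF _ pa(3) Em Ep, where t=t and n=n]) measurable
  show "(LINT z:phase_dom|lborel. g ((Phi t E ^^ n) z)) = (LINT z:phase_dom|lborel. g z)"
    unfolding set_lebesgue_integral_def
    using int gi e1 e2 unfolding set_integrable_def
    by (simp add: real_lebesgue_integral_def)
qed

lemma vec_lambda_sum_axis: "(\<chi> i. c i) = (\<Sum>i\<in>UNIV. c i *\<^sub>R axis i (1::real))"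
  by (simp add: vec_eq_iff axis_def if_distrib cong: if_cong)

lemma measurable_vec_lambda:
  assumes "\<And>i. (\<lambda>x. f x i) \<in> borel_measurable M"
  shows "(\<lambda>x. (\<chi> i. f x i) :: real^'d) \<in> borel_measurable M"
proof -
  have "(\<lambda>x. (\<Sum>i\<in>UNIV. f x i *\<^sub>R axis i (1::real))) \<in> borel_measurable M"
    using assms by (intro borel_measurable_sum borel_measurable_scaleR) auto
  then show ?thesis by (subst vec_lambda_sum_axis) simp
qed

lemma periodic_measurable:
  fixes f :: "(real^'d) \<times> (real^'d) \<Rightarrow> real"
  assumes per: "periodic_x f" and m: "set_borel_measurable lborel phase_dom f"
  shows "f \<in> borel_measurable borel"
proof -
  define Fr :: "(real^'d) \<times> (real^'d) \<Rightarrow> (real^'d) \<times> (real^'d)" where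
    "Fr z = ((\<chi> i. fst z $ i - of_int \<lfloor>fst z $ i\<rfloor>), snd z)" for z
  have Frm: "Fr \<in> borel_measurable borel"
    unfolding Fr_def
    by (intro borel_measurable_Pair measurable_vec_lambda borel_measurable_diff
         measurable_compose[OF _ borel_measurable_real_floor]) measurable
  have inPD: "Fr z \<in> phase_dom" for z
    by (simp add: Fr_def phase_dom_def) linarith
  have feq: "f z = f (Fr z)" for z
  proof -
    obtain x v where z: "z = (x, v)" by (cases z)
    have iv: "int_vec ((\<chi> i. of_int \<lfloor>x $ i\<rfloor>) :: real^'d)" by (simp add: int_vec_def)
    have "x = (\<chi> i. x $ i - of_int \<lfloor>x $ i\<rfloor>) + (\<chi> i. of_int \<lfloor>x $ i\<rfloor>)"
      by (simp add: vec_eq_iff)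
    then have "f (x, v) = f ((\<chi> i. x $ i - of_int \<lfloor>x $ i\<rfloor>) + (\<chi> i. of_int \<lfloor>x $ i\<rfloor>), v)" by simp
    also have "\<dots> = f ((\<chi> i. x $ i - of_int \<lfloor>x $ i\<rfloor>), v)"
      using per iv by (simp add: periodic_x_def)
    finally show ?thesis by (simp add: z Fr_def)
  qed
  have "(\<lambda>z. indicator phase_dom z *\<^sub>R f z) \<in> borel_measurable borel"
    using m by (simp add: set_borel_measurable_def)
  then have "(\<lambda>z. (\<lambda>z. indicator phase_dom z *\<^sub>R f z) (Fr z)) \<in> borel_measurable borel"
    by (rule measurable_compose[OF Frm])
  moreover have "(\<lambda>z. (\<lambda>z. indicator phase_dom z *\<^sub>R f z) (Fr z)) = f"
    using inPD feq by (auto simp: fun_eq_iff)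
  ultimately show ?thesis by simp
qed



lemma gauss_mgf:
  fixes s a :: real
  assumes s: "s > 0"
  shows "integrable lborel (\<lambda>x. normal_density 0 s x * exp (a * x))"
    and "(\<integral>x. normal_density 0 s x * exp (a * x) \<partial>lborel) = exp (a\<^sup>2 * s\<^sup>2 / 2)"
proof -
  have eq: "normal_density 0 s x * exp (a * x) = exp (a\<^sup>2 * s\<^sup>2 / 2) * normal_density (a * s\<^sup>2) s x" for x
  proof -
    have "- x\<^sup>2 / (2 * s\<^sup>2) + a * x = a\<^sup>2 * s\<^sup>2 / 2 + (- (x - a * s\<^sup>2)\<^sup>2 / (2 * s\<^sup>2))"
      using s by (simp add: field_simps power2_eq_square)
    then have "exp (- x\<^sup>2 / (2 * s\<^sup>2)) * exp (a * x) = exp (a\<^sup>2 * s\<^sup>2 / 2) * exp (- (x - a * s\<^sup>2)\<^sup>2 / (2 * s\<^sup>2))"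
      by (simp add: exp_add[symmetric])
    then show ?thesis unfolding normal_density_def using s by (simp add: algebra_simps)
  qed
  show "integrable lborel (\<lambda>x. normal_density 0 s x * exp (a * x))"
    unfolding eq using s by (intro integrable_mult_right integrable_normal_density) auto
  show "(\<integral>x. normal_density 0 s x * exp (a * x) \<partial>lborel) = exp (a\<^sup>2 * s\<^sup>2 / 2)"
    unfolding eq using s by simp
qed

definition incr :: "real \<Rightarrow> (nat \<Rightarrow> real \<Rightarrow> 'w \<Rightarrow> real) \<Rightarrow> nat \<Rightarrow> nat \<Rightarrow> 'w \<Rightarrow> real" where
  "incr t \<beta> j k \<omega> = \<beta> k (real (Suc j) * t) \<omega> - \<beta> k (real j * t) \<omega>"

lemma W_prob: "indep_wiener M K \<beta> \<Longrightarrow> prob_space M"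
  by (simp add: indep_wiener_def)

lemma incr_measurable:
  assumes W: "indep_wiener M K \<beta>" and t: "0 < t" and k: "k < K"
  shows "incr t \<beta> j k \<in> borel_measurable M"
proof -
  have "\<beta> k (real (Suc j) * t) \<in> borel_measurable M" "\<beta> k (real j * t) \<in> borel_measurable M"
    using W k t unfolding indep_wiener_def by auto
  then show ?thesis unfolding incr_def by (intro borel_measurable_diff)
qed

lemma W_ts:
  assumes W: "indep_wiener M K \<beta>" and t: "0 < t"
  shows "prob_space.indep_vars M (\<lambda>_. borel)
          (\<lambda>(k, i) \<omega>. \<beta> k (real (Suc i) * t) \<omega> - \<beta> k (real i * t) \<omega>) ({..<K} \<times> {..<n})"
    and "\<And>k i. k < K \<Longrightarrow> i < n \<Longrightarrow> distributed M lborel (\<lambda>\<omega>. \<beta> k (real (Suc i) * t) \<omega> - \<beta> k (real i * t) \<omega>)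
            (\<lambda>y. ennreal (normal_density 0 (sqrt (real (Suc i) * t - real i * t)) y))"
proof -
  have h: "0 \<le> real 0 * t" "\<forall>i<n. real i * t < real (Suc i) * t" using t by auto
  from W have "\<forall>(n::nat) (ts::nat \<Rightarrow> real). 0 \<le> ts 0 \<longrightarrow> (\<forall>i<n. ts i < ts (Suc i)) \<longrightarrow>
        prob_space.indep_vars M (\<lambda>_. borel)
          (\<lambda>(k, i) \<omega>. \<beta> k (ts (Suc i)) \<omega> - \<beta> k (ts i) \<omega>) ({..<K} \<times> {..<n}) \<and>
        (\<forall>k<K. \<forall>i<n. distributed M lborel (\<lambda>\<omega>. \<beta> k (ts (Suc i)) \<omega> - \<beta> k (ts i) \<omega>)
            (\<lambda>y. ennreal (normal_density 0 (sqrt (ts (Suc i) - ts i)) y)))"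
    unfolding indep_wiener_def by blast
  from this[rule_format, of "\<lambda>i. real i * t" n, OF h(1) h(2)[rule_format]]
  show "prob_space.indep_vars M (\<lambda>_. borel)
          (\<lambda>(k, i) \<omega>. \<beta> k (real (Suc i) * t) \<omega> - \<beta> k (real i * t) \<omega>) ({..<K} \<times> {..<n})"
    and "\<And>k i. k < K \<Longrightarrow> i < n \<Longrightarrow> distributed M lborel (\<lambda>\<omega>. \<beta> k (real (Suc i) * t) \<omega> - \<beta> k (real i * t) \<omega>)
            (\<lambda>y. ennreal (normal_density 0 (sqrt (real (Suc i) * t - real i * t)) y))"
    by auto
qed

lemma exp_incr:
  assumes W: "indep_wiener M K \<beta>" and t: "0 < t" and k: "k < K"
  shows "integrable M (\<lambda>\<omega>. exp (a * incr t \<beta> j k \<omega>))"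
    and "(\<integral>\<omega>. exp (a * incr t \<beta> j k \<omega>) \<partial>M) = exp (a\<^sup>2 * t / 2)"
proof -
  have d0: "distributed M lborel (\<lambda>\<omega>. \<beta> k (real (Suc j) * t) \<omega> - \<beta> k (real j * t) \<omega>)
            (\<lambda>y. ennreal (normal_density 0 (sqrt (real (Suc j) * t - real j * t)) y))"
    using W_ts(2)[OF W t k, of j "Suc j"] by simp
  have tt: "real (Suc j) * t - real j * t = t" by (simp add: algebra_simps)
  have d: "distributed M lborel (incr t \<beta> j k) (\<lambda>y. ennreal (normal_density 0 (sqrt t) y))"
    using d0 unfolding tt incr_def[abs_def] by simp
  have st: "sqrt t > 0" using t by simp
  have "integrable lborel (\<lambda>x. normal_density 0 (sqrt t) x * exp (a * x))"
    by (rule gauss_mgf(1)[OF st])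
  then show "integrable M (\<lambda>\<omega>. exp (a * incr t \<beta> j k \<omega>))"
    using distributed_integrable[OF d, of "\<lambda>x. exp (a * x)"] by simp
  have "(\<integral>\<omega>. exp (a * incr t \<beta> j k \<omega>) \<partial>M) = (\<integral>x. normal_density 0 (sqrt t) x * exp (a * x) \<partial>lborel)"
    using distributed_integral[OF d, of "\<lambda>x. exp (a * x)"] by simp
  also have "\<dots> = exp (a\<^sup>2 * t / 2)"
    using gauss_mgf(2)[OF st] t by simp
  finally show "(\<integral>\<omega>. exp (a * incr t \<beta> j k \<omega>) \<partial>M) = exp (a\<^sup>2 * t / 2)" .
qed



lemma sum_sq_swap:
  fixes a :: "nat \<Rightarrow> nat \<Rightarrow> real"
  shows "(\<Sum>p\<in>{..<K} \<times> {..<n}. (a (snd p) (fst p))\<^sup>2 * t / 2) = (\<Sum>j<n. t / 2 * (\<Sum>k<K. (a j k)\<^sup>2))"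
proof -
  have "(\<Sum>j<n. t / 2 * (\<Sum>k<K. (a j k)\<^sup>2)) = (\<Sum>j<n. \<Sum>k<K. t / 2 * (a j k)\<^sup>2)"
    by (simp only: sum_distrib_left)
  also have "\<dots> = (\<Sum>k<K. \<Sum>j<n. t / 2 * (a j k)\<^sup>2)" by (rule sum.swap)
  also have "\<dots> = (\<Sum>p\<in>{..<K} \<times> {..<n}. t / 2 * (a (snd p) (fst p))\<^sup>2)"
    by (simp add: sum.cartesian_product case_prod_beta)
  also have "\<dots> = (\<Sum>p\<in>{..<K} \<times> {..<n}. (a (snd p) (fst p))\<^sup>2 * t / 2)"
    by (intro sum.cong refl) (simp only: mult.commute times_divide_eq_right)
  finally show ?thesis by (rule sym)
qed

lemma exp_neg_mult: "exp (- B) * exp X = exp (X - (B::real))"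
  by (simp add: exp_diff exp_minus field_simps)

lemma prod_exp_incr:
  assumes W: "indep_wiener M K \<beta>" and t: "0 < t"
  shows "integrable M (\<lambda>\<omega>. \<Prod>j<n. exp ((\<Sum>k<K. a j k * incr t \<beta> j k \<omega>) - b j))"
    and "(\<integral>\<omega>. (\<Prod>j<n. exp ((\<Sum>k<K. a j k * incr t \<beta> j k \<omega>) - b j)) \<partial>M)
         = exp (\<Sum>j<n. (t / 2 * (\<Sum>k<K. (a j k)\<^sup>2) - b j))"
proof -
  interpret P: prob_space M using W_prob[OF W] .
  let ?I = "{..<K} \<times> {..<n}"
  define Xp where "Xp p \<omega> = exp (a (snd p) (fst p) * incr t \<beta> (snd p) (fst p) \<omega>)" for p \<omega>
  have rw: "(\<Prod>j<n. exp ((\<Sum>k<K. a j k * incr t \<beta> j k \<omega>) - b j)) = exp (- (\<Sum>j<n. b j)) * (\<Prod>p\<in>?I. Xp p \<omega>)" for \<omega>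
  proof -
    have "(\<Prod>j<n. exp ((\<Sum>k<K. a j k * incr t \<beta> j k \<omega>) - b j)) = exp (\<Sum>j<n. ((\<Sum>k<K. a j k * incr t \<beta> j k \<omega>) - b j))"
      by (simp add: exp_sum)
    also have "(\<Sum>j<n. ((\<Sum>k<K. a j k * incr t \<beta> j k \<omega>) - b j)) = (\<Sum>j<n. \<Sum>k<K. a j k * incr t \<beta> j k \<omega>) - (\<Sum>j<n. b j)"
      by (simp add: sum_subtractf)
    also have "(\<Sum>j<n. \<Sum>k<K. a j k * incr t \<beta> j k \<omega>) = (\<Sum>p\<in>?I. a (snd p) (fst p) * incr t \<beta> (snd p) (fst p) \<omega>)"
      by (subst sum.swap) (simp add: sum.cartesian_product case_prod_beta)
    finally have e: "(\<Prod>j<n. exp ((\<Sum>k<K. a j k * incr t \<beta> j k \<omega>) - b j)) =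
       exp ((\<Sum>p\<in>?I. a (snd p) (fst p) * incr t \<beta> (snd p) (fst p) \<omega>) - (\<Sum>j<n. b j))" .
    have "exp ((\<Sum>p\<in>?I. a (snd p) (fst p) * incr t \<beta> (snd p) (fst p) \<omega>) - (\<Sum>j<n. b j))
      = exp (- (\<Sum>j<n. b j)) * exp (\<Sum>p\<in>?I. a (snd p) (fst p) * incr t \<beta> (snd p) (fst p) \<omega>)"
      by (rule exp_neg_mult[symmetric])
    also have "exp (\<Sum>p\<in>?I. a (snd p) (fst p) * incr t \<beta> (snd p) (fst p) \<omega>) = (\<Prod>p\<in>?I. Xp p \<omega>)"
      unfolding Xp_def by (rule exp_sum) simp
    finally show ?thesis using e by simp
  qed
  have ind0: "P.indep_vars (\<lambda>_. borel) (\<lambda>(k, i) \<omega>. \<beta> k (real (Suc i) * t) \<omega> - \<beta> k (real i * t) \<omega>) ?I"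
    by (rule W_ts(1)[OF W t])
  have ind1: "P.indep_vars (\<lambda>_. borel) (\<lambda>p \<omega>. (\<lambda>x. exp (a (snd p) (fst p) * x))
       ((\<lambda>(k, i) \<omega>. \<beta> k (real (Suc i) * t) \<omega> - \<beta> k (real i * t) \<omega>) p \<omega>)) ?I"
    by (rule P.indep_vars_compose2[OF ind0]) measurable
  have "(\<lambda>p \<omega>. (\<lambda>x. exp (a (snd p) (fst p) * x))
       ((\<lambda>(k, i) \<omega>. \<beta> k (real (Suc i) * t) \<omega> - \<beta> k (real i * t) \<omega>) p \<omega>)) = Xp"
    by (auto simp: fun_eq_iff Xp_def incr_def split: prod.splits)
  with ind1 have ind: "P.indep_vars (\<lambda>_. borel) Xp ?I" by simp
  have intp: "integrable M (Xp p)" if "p \<in> ?I" for p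
    using exp_incr(1)[OF W t, of "fst p"] that unfolding Xp_def[abs_def] by auto
  have ip: "integral\<^sup>L M (Xp p) = exp ((a (snd p) (fst p))\<^sup>2 * t / 2)" if "p \<in> ?I" for p
    using exp_incr(2)[OF W t, of "fst p"] that unfolding Xp_def[abs_def] by auto
  have I1: "integrable M (\<lambda>\<omega>. \<Prod>p\<in>?I. Xp p \<omega>)"
    by (rule P.indep_vars_integrable[OF _ ind intp]) auto
  have I2: "(\<integral>\<omega>. (\<Prod>p\<in>?I. Xp p \<omega>) \<partial>M) = (\<Prod>p\<in>?I. exp ((a (snd p) (fst p))\<^sup>2 * t / 2))"
    by (subst P.indep_vars_lebesgue_integral[OF _ ind intp]) (auto intro!: prod.cong simp: ip)
  show "integrable M (\<lambda>\<omega>. \<Prod>j<n. exp ((\<Sum>k<K. a j k * incr t \<beta> j k \<omega>) - b j))"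
    unfolding rw by (intro integrable_mult_right I1)
  have "(\<Prod>p\<in>?I. exp ((a (snd p) (fst p))\<^sup>2 * t / 2)) = exp (\<Sum>p\<in>?I. (a (snd p) (fst p))\<^sup>2 * t / 2)"
    by (simp add: exp_sum)
  also have "(\<Sum>p\<in>?I. (a (snd p) (fst p))\<^sup>2 * t / 2) = (\<Sum>j<n. t / 2 * (\<Sum>k<K. (a j k)\<^sup>2))"
    by (rule sum_sq_swap)
  finally have I3: "(\<Prod>p\<in>?I. exp ((a (snd p) (fst p))\<^sup>2 * t / 2)) = exp (\<Sum>j<n. t / 2 * (\<Sum>k<K. (a j k)\<^sup>2))" .
  show "(\<integral>\<omega>. (\<Prod>j<n. exp ((\<Sum>k<K. a j k * incr t \<beta> j k \<omega>) - b j)) \<partial>M)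
         = exp (\<Sum>j<n. (t / 2 * (\<Sum>k<K. (a j k)\<^sup>2) - b j))"
    unfolding rw
  proof -
    have "(\<integral>\<omega>. exp (- (\<Sum>j<n. b j)) * (\<Prod>p\<in>?I. Xp p \<omega>) \<partial>M) = exp (- (\<Sum>j<n. b j)) * (\<integral>\<omega>. (\<Prod>p\<in>?I. Xp p \<omega>) \<partial>M)"
      by (rule integral_mult_right_zero)
    also have "\<dots> = exp (- (\<Sum>j<n. b j)) * exp (\<Sum>j<n. t / 2 * (\<Sum>k<K. (a j k)\<^sup>2))"
      unfolding I2 I3 ..
    also have "\<dots> = exp ((\<Sum>j<n. t / 2 * (\<Sum>k<K. (a j k)\<^sup>2)) - (\<Sum>j<n. b j))"
      by (rule exp_neg_mult)
    also have "\<dots> = exp (\<Sum>j<n. (t / 2 * (\<Sum>k<K. (a j k)\<^sup>2) - b j))"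
      by (simp only: sum_subtractf)
    finally show "(\<integral>\<omega>. exp (- (\<Sum>j<n. b j)) * (\<Prod>p\<in>?I. Xp p \<omega>) \<partial>M) = exp (\<Sum>j<n. (t / 2 * (\<Sum>k<K. (a j k)\<^sup>2) - b j))" .
  qed
qed



definition Aco :: "real \<Rightarrow> nat \<Rightarrow> (nat \<Rightarrow> (real^'d) \<times> (real^'d) \<Rightarrow> real) \<Rightarrow> (nat \<Rightarrow> real \<Rightarrow> 'w \<Rightarrow> real)
   \<Rightarrow> nat \<Rightarrow> (real^'d) \<times> (real^'d) \<Rightarrow> 'w \<Rightarrow> real" where
  "Aco t K \<sigma> \<beta> j y \<omega> = (\<Sum>k<K. \<sigma> k y * incr t \<beta> j k \<omega>) - t / 2 * (\<Sum>k<K. (\<sigma> k y)\<^sup>2)"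

lemma S2S1: "S2 t E (S1 t g) z = g (Phi t E z)"
  by (cases z) (simp add: S1_def S2_def Phi_def)

lemma fmI_unroll:
  "fmI t E K \<sigma> \<beta> f0 n \<omega> z = f0 ((Phi t E ^^ n) z) * (\<Prod>j<n. exp (Aco t K \<sigma> \<beta> j ((Phi t E ^^ (n - Suc j)) z) \<omega>))"
proof (induction n arbitrary: z)
  case 0 then show ?case by simp
next
  case (Suc n)
  have e1: "fmI t E K \<sigma> \<beta> f0 (Suc n) \<omega> z = exp (Aco t K \<sigma> \<beta> n z \<omega>) * fmI t E K \<sigma> \<beta> f0 n \<omega> (Phi t E z)"
    by (simp add: S2S1 Aco_def incr_def)
  have e2: "(Phi t E ^^ (n - Suc j)) (Phi t E z) = (Phi t E ^^ (Suc n - Suc j)) z" if "j < n" for j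
  proof -
    have "Suc n - Suc j = Suc (n - Suc j)" using that by simp
    then show ?thesis by (simp only: funpow_Suc_right o_apply)
  qed
  have e3: "(Phi t E ^^ n) (Phi t E z) = (Phi t E ^^ Suc n) z"
    by (simp only: funpow_Suc_right o_apply)
  have "fmI t E K \<sigma> \<beta> f0 (Suc n) \<omega> z = exp (Aco t K \<sigma> \<beta> n z \<omega>) * (f0 ((Phi t E ^^ Suc n) z) *
     (\<Prod>j<n. exp (Aco t K \<sigma> \<beta> j ((Phi t E ^^ (Suc n - Suc j)) z) \<omega>)))"
    unfolding e1 Suc e3 using e2 by simp
  also have "\<dots> = f0 ((Phi t E ^^ Suc n) z) * (\<Prod>j<Suc n. exp (Aco t K \<sigma> \<beta> j ((Phi t E ^^ (Suc n - Suc j)) z) \<omega>))"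
    by (simp add: lessThan_Suc)
  finally show ?case .
qed

lemma smooth_cont: "smooth_map f \<Longrightarrow> continuous_on UNIV f"
  unfolding smooth_map_def
  by (auto intro!: continuous_at_imp_continuous_on dest: has_derivative_continuous)

context
  fixes M :: "'w measure" and K :: nat and \<beta> :: "nat \<Rightarrow> real \<Rightarrow> 'w \<Rightarrow> real"
    and E :: "real^'d \<Rightarrow> real^'d" and \<sigma> :: "nat \<Rightarrow> (real^'d) \<times> (real^'d) \<Rightarrow> real"
    and f0 :: "(real^'d) \<times> (real^'d) \<Rightarrow> real" and \<tau> :: real
  assumes W: "indep_wiener M K \<beta>" and Em[measurable]: "E \<in> borel_measurable borel" and Ep: "periodic_torus E"
    and \<sigma>m: "\<And>k. k < K \<Longrightarrow> \<sigma> k \<in> borel_measurable borel"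
    and \<sigma>b: "\<And>k. k < K \<Longrightarrow> bounded (range (\<sigma> k))"
    and f0m[measurable]: "f0 \<in> borel_measurable borel" and f0p: "periodic_x f0" and \<tau>: "0 < \<tau>"
begin

lemma Aco_meas:
  assumes g: "g \<in> N \<rightarrow>\<^sub>M borel" and h: "h \<in> N \<rightarrow>\<^sub>M M"
  shows "(\<lambda>x. Aco \<tau> K \<sigma> \<beta> j (g x) (h x)) \<in> borel_measurable N"
  unfolding Aco_def
proof (intro borel_measurable_diff borel_measurable_times borel_measurable_const borel_measurable_sum)
  fix k assume "k \<in> {..<K}"
  then have k: "k < K" by simp
  show "(\<lambda>x. \<sigma> k (g x)) \<in> borel_measurable N"
    by (rule measurable_compose[OF g \<sigma>m[OF k]])
  show "(\<lambda>x. incr \<tau> \<beta> j k (h x)) \<in> borel_measurable N"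
    by (rule measurable_compose[OF h incr_measurable[OF W \<tau> k]])
  show "(\<lambda>x. (\<sigma> k (g x))\<^sup>2) \<in> borel_measurable N"
    using measurable_compose[OF g \<sigma>m[OF k]] by measurable
qed

lemma fmI_meas:
  assumes g: "g \<in> N \<rightarrow>\<^sub>M borel" and h: "h \<in> N \<rightarrow>\<^sub>M M"
  shows "(\<lambda>x. fmI \<tau> E K \<sigma> \<beta> f0 n (h x) (g x)) \<in> borel_measurable N"
  unfolding fmI_unroll
proof (intro borel_measurable_times borel_measurable_prod borel_measurable_exp[THEN measurable_compose[rotated]])
  show "(\<lambda>x. f0 ((Phi \<tau> E ^^ n) (g x))) \<in> borel_measurable N"
    using g by measurable
  fix j
  have "(\<lambda>x. (Phi \<tau> E ^^ (n - Suc j)) (g x)) \<in> N \<rightarrow>\<^sub>M borel" using g by measurable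
  then show "(\<lambda>x. Aco \<tau> K \<sigma> \<beta> j ((Phi \<tau> E ^^ (n - Suc j)) (g x)) (h x)) \<in> borel_measurable N"
    by (rule Aco_meas[OF _ h])
qed

lemma prodA_int:
  shows "integrable M (\<lambda>\<omega>. \<Prod>j<n. exp (Aco \<tau> K \<sigma> \<beta> j (y j) \<omega>))"
    and "(\<integral>\<omega>. (\<Prod>j<n. exp (Aco \<tau> K \<sigma> \<beta> j (y j) \<omega>)) \<partial>M) = 1"
proof -
  have "integrable M (\<lambda>\<omega>. \<Prod>j<n. exp ((\<Sum>k<K. \<sigma> k (y j) * incr \<tau> \<beta> j k \<omega>) - \<tau> / 2 * (\<Sum>k<K. (\<sigma> k (y j))\<^sup>2)))"
    by (rule prod_exp_incr(1)[OF W \<tau>])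
  then show "integrable M (\<lambda>\<omega>. \<Prod>j<n. exp (Aco \<tau> K \<sigma> \<beta> j (y j) \<omega>))"
    by (simp add: Aco_def)
  have "(\<integral>\<omega>. (\<Prod>j<n. exp ((\<Sum>k<K. \<sigma> k (y j) * incr \<tau> \<beta> j k \<omega>) - \<tau> / 2 * (\<Sum>k<K. (\<sigma> k (y j))\<^sup>2))) \<partial>M)
     = exp (\<Sum>j<n. (\<tau> / 2 * (\<Sum>k<K. (\<sigma> k (y j))\<^sup>2) - \<tau> / 2 * (\<Sum>k<K. (\<sigma> k (y j))\<^sup>2)))"
    by (rule prod_exp_incr(2)[OF W \<tau>])
  then show "(\<integral>\<omega>. (\<Prod>j<n. exp (Aco \<tau> K \<sigma> \<beta> j (y j) \<omega>)) \<partial>M) = 1"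
    by (simp add: Aco_def)
qed

lemma prodA_sq:
  assumes s: "\<And>z. (\<Sum>k<K. (\<sigma> k z)\<^sup>2) = s\<^sup>2"
  shows "integrable M (\<lambda>\<omega>. (\<Prod>j<n. exp (Aco \<tau> K \<sigma> \<beta> j (y j) \<omega>))\<^sup>2)"
    and "(\<integral>\<omega>. (\<Prod>j<n. exp (Aco \<tau> K \<sigma> \<beta> j (y j) \<omega>))\<^sup>2 \<partial>M) = exp (s\<^sup>2 * (real n * \<tau>))"
proof -
  have eq: "(\<Prod>j<n. exp (Aco \<tau> K \<sigma> \<beta> j (y j) \<omega>))\<^sup>2 =
     (\<Prod>j<n. exp ((\<Sum>k<K. (2 * \<sigma> k (y j)) * incr \<tau> \<beta> j k \<omega>) - \<tau> * (\<Sum>k<K. (\<sigma> k (y j))\<^sup>2)))" for \<omega>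
  proof -
    have "(\<Prod>j<n. exp (Aco \<tau> K \<sigma> \<beta> j (y j) \<omega>))\<^sup>2 = (\<Prod>j<n. (exp (Aco \<tau> K \<sigma> \<beta> j (y j) \<omega>))\<^sup>2)"
      by (simp add: prod_power_distrib)
    also have "\<dots> = (\<Prod>j<n. exp ((\<Sum>k<K. (2 * \<sigma> k (y j)) * incr \<tau> \<beta> j k \<omega>) - \<tau> * (\<Sum>k<K. (\<sigma> k (y j))\<^sup>2)))"
    proof (intro prod.cong refl)
      fix j
      have "2 * Aco \<tau> K \<sigma> \<beta> j (y j) \<omega> = (\<Sum>k<K. (2 * \<sigma> k (y j)) * incr \<tau> \<beta> j k \<omega>) - \<tau> * (\<Sum>k<K. (\<sigma> k (y j))\<^sup>2)"
        unfolding Aco_def by (simp add: sum_distrib_left right_diff_distrib mult.assoc)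
      then show "(exp (Aco \<tau> K \<sigma> \<beta> j (y j) \<omega>))\<^sup>2 = exp ((\<Sum>k<K. (2 * \<sigma> k (y j)) * incr \<tau> \<beta> j k \<omega>) - \<tau> * (\<Sum>k<K. (\<sigma> k (y j))\<^sup>2))"
        by (metis exp_double)
    qed
    finally show ?thesis .
  qed
  show "integrable M (\<lambda>\<omega>. (\<Prod>j<n. exp (Aco \<tau> K \<sigma> \<beta> j (y j) \<omega>))\<^sup>2)"
    unfolding eq by (rule prod_exp_incr(1)[OF W \<tau>])
  have "(\<integral>\<omega>. (\<Prod>j<n. exp (Aco \<tau> K \<sigma> \<beta> j (y j) \<omega>))\<^sup>2 \<partial>M)
     = exp (\<Sum>j<n. (\<tau> / 2 * (\<Sum>k<K. (2 * \<sigma> k (y j))\<^sup>2) - \<tau> * (\<Sum>k<K. (\<sigma> k (y j))\<^sup>2)))"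
    unfolding eq by (rule prod_exp_incr(2)[OF W \<tau>])
  also have "(\<Sum>j<n. (\<tau> / 2 * (\<Sum>k<K. (2 * \<sigma> k (y j))\<^sup>2) - \<tau> * (\<Sum>k<K. (\<sigma> k (y j))\<^sup>2))) = s\<^sup>2 * (real n * \<tau>)"
  proof -
    have "\<tau> / 2 * (\<Sum>k<K. (2 * \<sigma> k (y j))\<^sup>2) - \<tau> * (\<Sum>k<K. (\<sigma> k (y j))\<^sup>2) = \<tau> * s\<^sup>2" for j
    proof -
      have "(\<Sum>k<K. (2 * \<sigma> k (y j))\<^sup>2) = 4 * (\<Sum>k<K. (\<sigma> k (y j))\<^sup>2)"
        by (simp add: power_mult_distrib sum_distrib_left)
      then show ?thesis using s[of "y j"] by simp
    qed
    then show ?thesis by simp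
  qed
  finally show "(\<integral>\<omega>. (\<Prod>j<n. exp (Aco \<tau> K \<sigma> \<beta> j (y j) \<omega>))\<^sup>2 \<partial>M) = exp (s\<^sup>2 * (real n * \<tau>))" .
qed


lemma sigma_bound: "\<exists>B. \<forall>k<K. \<forall>z. \<bar>\<sigma> k z\<bar> \<le> B k"
proof -
  have "\<forall>k. \<exists>b. k < K \<longrightarrow> (\<forall>z. \<bar>\<sigma> k z\<bar> \<le> b)"
  proof
    fix k
    show "\<exists>b. k < K \<longrightarrow> (\<forall>z. \<bar>\<sigma> k z\<bar> \<le> b)"
    proof (cases "k < K")
      case True
      then obtain b where "\<forall>x\<in>range (\<sigma> k). \<bar>x\<bar> \<le> b" using \<sigma>b[OF True] unfolding bounded_real by blast
      then show ?thesis by auto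
    qed auto
  qed
  then show ?thesis by metis
qed

lemma part2_int:
  assumes f0i: "set_integrable lborel phase_dom f0" and \<omega>: "\<omega> \<in> space M"
  shows "set_integrable lborel phase_dom (fmI \<tau> E K \<sigma> \<beta> f0 n \<omega>)"
proof -
  obtain B where B: "\<And>k z. k < K \<Longrightarrow> \<bar>\<sigma> k z\<bar> \<le> B k" using sigma_bound by blast
  define C where "C = (\<Prod>j<n. exp (\<Sum>k<K. B k * \<bar>incr \<tau> \<beta> j k \<omega>\<bar>))"
  have C0: "0 \<le> C" unfolding C_def by (intro prod_nonneg) auto
  have Abound: "Aco \<tau> K \<sigma> \<beta> j y \<omega> \<le> (\<Sum>k<K. B k * \<bar>incr \<tau> \<beta> j k \<omega>\<bar>)" for j y
  proof -
    have "Aco \<tau> K \<sigma> \<beta> j y \<omega> \<le> (\<Sum>k<K. \<sigma> k y * incr \<tau> \<beta> j k \<omega>)"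
      unfolding Aco_def using \<tau> by (simp add: sum_nonneg)
    also have "\<dots> \<le> (\<Sum>k<K. B k * \<bar>incr \<tau> \<beta> j k \<omega>\<bar>)"
    proof (intro sum_mono)
      fix k assume "k \<in> {..<K}"
      then have "\<bar>\<sigma> k y\<bar> \<le> B k" using B by simp
      then have "\<bar>\<sigma> k y\<bar> * \<bar>incr \<tau> \<beta> j k \<omega>\<bar> \<le> B k * \<bar>incr \<tau> \<beta> j k \<omega>\<bar>"
        by (intro mult_right_mono) auto
      then show "\<sigma> k y * incr \<tau> \<beta> j k \<omega> \<le> B k * \<bar>incr \<tau> \<beta> j k \<omega>\<bar>"
        by (metis abs_ge_self abs_mult order_trans)
    qed
    finally show ?thesis .
  qed
  have Pbound: "(\<Prod>j<n. exp (Aco \<tau> K \<sigma> \<beta> j (y j) \<omega>)) \<le> C" for y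
    unfolding C_def by (intro prod_mono) (auto intro: Abound)
  have ff: "integrable lborel (\<lambda>z. C * (indicator phase_dom z *\<^sub>R f0 ((Phi \<tau> E ^^ n) z)))"
    using Phi_pow_int(1)[OF f0m f0p Em Ep f0i, where t=\<tau> and n=n] unfolding set_integrable_def
    by (rule integrable_mult_right)
  have gm: "(\<lambda>z. indicator phase_dom z *\<^sub>R fmI \<tau> E K \<sigma> \<beta> f0 n \<omega> z) \<in> borel_measurable lborel"
  proof -
    have "(\<lambda>z. fmI \<tau> E K \<sigma> \<beta> f0 n ((\<lambda>_. \<omega>) z) (id z)) \<in> borel_measurable lborel"
      by (rule fmI_meas) (auto simp: \<omega>)
    then show ?thesis by simp
  qed
  show ?thesis
    unfolding set_integrable_def
  proof (rule Bochner_Integration.integrable_bound[OF ff gm], intro AE_I2)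
    fix z
    let ?P = "\<Prod>j<n. exp (Aco \<tau> K \<sigma> \<beta> j ((Phi \<tau> E ^^ (n - Suc j)) z) \<omega>)"
    have P0: "0 \<le> ?P" by (intro prod_nonneg) auto
    have "norm (indicator phase_dom z *\<^sub>R fmI \<tau> E K \<sigma> \<beta> f0 n \<omega> z) = indicator phase_dom z * \<bar>f0 ((Phi \<tau> E ^^ n) z)\<bar> * ?P"
      unfolding fmI_unroll using P0 by (simp add: abs_mult split: split_indicator)
    also have "\<dots> \<le> indicator phase_dom z * \<bar>f0 ((Phi \<tau> E ^^ n) z)\<bar> * C"
      by (intro mult_left_mono Pbound) auto
    also have "\<dots> = norm (C * (indicator phase_dom z *\<^sub>R f0 ((Phi \<tau> E ^^ n) z)))"
      using C0 by (simp add: abs_mult split: split_indicator)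
    finally show "norm (indicator phase_dom z *\<^sub>R fmI \<tau> E K \<sigma> \<beta> f0 n \<omega> z) \<le> norm (C * (indicator phase_dom z *\<^sub>R f0 ((Phi \<tau> E ^^ n) z)))" .
  qed
qed

lemma part2_exp: "(\<integral>\<omega>. fmI \<tau> E K \<sigma> \<beta> f0 n \<omega> z \<partial>M) = f0 ((Phi \<tau> E ^^ n) z)"
proof -
  have "(\<integral>\<omega>. fmI \<tau> E K \<sigma> \<beta> f0 n \<omega> z \<partial>M) =
     f0 ((Phi \<tau> E ^^ n) z) * (\<integral>\<omega>. (\<Prod>j<n. exp (Aco \<tau> K \<sigma> \<beta> j ((Phi \<tau> E ^^ (n - Suc j)) z) \<omega>)) \<partial>M)"
    unfolding fmI_unroll by (rule integral_mult_right_zero)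
  also have "\<dots> = f0 ((Phi \<tau> E ^^ n) z)"
    using prodA_int(2)[where n=n and y="\<lambda>j. (Phi \<tau> E ^^ (n - Suc j)) z"] by simp
  finally show ?thesis .
qed

lemma part2_mass:
  assumes f0i: "set_integrable lborel phase_dom f0"
  shows "(LINT z:phase_dom|lborel. integral\<^sup>L M (\<lambda>\<omega>. fmI \<tau> E K \<sigma> \<beta> f0 n \<omega> z)) = (LINT z:phase_dom|lborel. f0 z)"
  unfolding part2_exp by (rule Phi_pow_int(2)[OF f0m f0p Em Ep f0i])


lemma part3:
  assumes s: "\<And>z. (\<Sum>k<K. (\<sigma> k z)\<^sup>2) = s\<^sup>2"
    and f0i2: "set_integrable lborel phase_dom (\<lambda>z. (f0 z)\<^sup>2)"
  shows "integrable (M \<Otimes>\<^sub>M lborel) (\<lambda>(\<omega>, z). indicator phase_dom z * (fmI \<tau> E K \<sigma> \<beta> f0 n \<omega> z)\<^sup>2)"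
    and "(\<lambda>(\<omega>, z). indicator phase_dom z * fmI \<tau> E K \<sigma> \<beta> f0 n \<omega> z) \<in> borel_measurable (M \<Otimes>\<^sub>M lborel)"
    and "integral\<^sup>L M (\<lambda>\<omega>. LINT z:phase_dom|lborel. (fmI \<tau> E K \<sigma> \<beta> f0 n \<omega> z)\<^sup>2)
               = exp (s\<^sup>2 * (real n * \<tau>)) * (LINT z:phase_dom|lborel. (f0 z)\<^sup>2)"
proof -
  interpret P: prob_space M using W_prob[OF W] .
  interpret MP: pair_sigma_finite M lborel
    by (simp add: pair_sigma_finite_def P.sigma_finite_measure_axioms lborel.sigma_finite_measure_axioms)
  let ?f = "fmI \<tau> E K \<sigma> \<beta> f0 n"
  let ?F = "\<lambda>(\<omega>, z). indicator phase_dom z * (?f \<omega> z)\<^sup>2"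
  define e where "e = exp (s\<^sup>2 * (real n * \<tau>))"
  have e0: "0 \<le> e" by (simp add: e_def)
  have fm[measurable]: "(\<lambda>x. ?f (fst x) (snd x)) \<in> borel_measurable (M \<Otimes>\<^sub>M lborel)"
    by (rule fmI_meas) auto
  show "(\<lambda>(\<omega>, z). indicator phase_dom z * ?f \<omega> z) \<in> borel_measurable (M \<Otimes>\<^sub>M lborel)"
    unfolding case_prod_beta' by measurable
  have Fm[measurable]: "?F \<in> borel_measurable (M \<Otimes>\<^sub>M lborel)"
    unfolding case_prod_beta' by measurable
  define c where "c z = indicator phase_dom z * (f0 ((Phi \<tau> E ^^ n) z))\<^sup>2" for z
  have c0: "0 \<le> c z" for z by (simp add: c_def)
  let ?P = "\<lambda>z \<omega>. (\<Prod>j<n. exp (Aco \<tau> K \<sigma> \<beta> j ((Phi \<tau> E ^^ (n - Suc j)) z) \<omega>))\<^sup>2"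
  have Fc: "?F (\<omega>, z) = c z * ?P z \<omega>" for \<omega> z
    unfolding c_def fmI_unroll by (simp add: power_mult_distrib)
  have intz: "integrable M (\<lambda>\<omega>. ?F (\<omega>, z))" for z
    unfolding Fc by (intro integrable_mult_right prodA_sq(1)[OF s])
  have intgz: "(\<integral>\<omega>. ?F (\<omega>, z) \<partial>M) = c z * e" for z
    unfolding Fc e_def
    by (simp add: prodA_sq(2)[OF s, where n=n and y="\<lambda>j. (Phi \<tau> E ^^ (n - Suc j)) z"])
  have g2m: "(\<lambda>z. (f0 z)\<^sup>2) \<in> borel_measurable borel" by measurable
  have g2p: "periodic_x (\<lambda>z. (f0 z)\<^sup>2)" using f0p by (simp add: periodic_x_def)
  have ci: "integrable lborel c"
    using Phi_pow_int(1)[OF g2m g2p Em Ep f0i2, where t=\<tau> and n=n]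
    unfolding set_integrable_def c_def by simp
  have ce: "integrable lborel (\<lambda>z. c z * e)" using ci by (rule integrable_mult_left)
  have "(\<integral>\<^sup>+x. ennreal (norm (?F x)) \<partial>(M \<Otimes>\<^sub>M lborel)) = (\<integral>\<^sup>+z. \<integral>\<^sup>+\<omega>. ennreal (norm (?F (\<omega>, z))) \<partial>M \<partial>lborel)"
    by (rule MP.nn_integral_snd[symmetric]) measurable
  also have "\<dots> = (\<integral>\<^sup>+z. ennreal (c z * e) \<partial>lborel)"
  proof (intro nn_integral_cong)
    fix z
    have "(\<integral>\<^sup>+\<omega>. ennreal (norm (?F (\<omega>, z))) \<partial>M) = (\<integral>\<^sup>+\<omega>. ennreal (?F (\<omega>, z)) \<partial>M)"
      by (intro nn_integral_cong) simp
    also have "\<dots> = ennreal (\<integral>\<omega>. ?F (\<omega>, z) \<partial>M)"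
      by (rule nn_integral_eq_integral[OF intz]) simp
    also have "\<dots> = ennreal (c z * e)" by (simp only: intgz)
    finally show "(\<integral>\<^sup>+\<omega>. ennreal (norm (?F (\<omega>, z))) \<partial>M) = ennreal (c z * e)" .
  qed
  also have "\<dots> = ennreal (\<integral>z. c z * e \<partial>lborel)"
    by (rule nn_integral_eq_integral[OF ce]) (simp add: c0 e0)
  also have "\<dots> < \<infinity>" by simp
  finally have Fi: "integrable (M \<Otimes>\<^sub>M lborel) ?F"
    unfolding integrable_iff_bounded using Fm by simp
  then show "integrable (M \<Otimes>\<^sub>M lborel) ?F" .
  have "integral\<^sup>L M (\<lambda>\<omega>. LINT z:phase_dom|lborel. (?f \<omega> z)\<^sup>2) = (\<integral>\<omega>. \<integral>z. ?F (\<omega>, z) \<partial>lborel \<partial>M)"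
    unfolding set_lebesgue_integral_def by simp
  also have "\<dots> = integral\<^sup>L (M \<Otimes>\<^sub>M lborel) ?F"
    by (rule MP.integral_fst'[OF Fi])
  also have "\<dots> = (\<integral>z. \<integral>\<omega>. ?F (\<omega>, z) \<partial>M \<partial>lborel)"
    using MP.integral_snd[of "\<lambda>\<omega> z. indicator phase_dom z * (?f \<omega> z)\<^sup>2"] Fi by simp
  also have "\<dots> = (\<integral>z. c z * e \<partial>lborel)" by (simp only: intgz)
  also have "\<dots> = e * (LINT z:phase_dom|lborel. (f0 ((Phi \<tau> E ^^ n) z))\<^sup>2)"
    unfolding set_lebesgue_integral_def c_def by (simp add: mult.commute)
  also have "(LINT z:phase_dom|lborel. (f0 ((Phi \<tau> E ^^ n) z))\<^sup>2) = (LINT z:phase_dom|lborel. (f0 z)\<^sup>2)"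
    using Phi_pow_int(2)[OF g2m g2p Em Ep f0i2, where t=\<tau> and n=n] by simp
  finally show "integral\<^sup>L M (\<lambda>\<omega>. LINT z:phase_dom|lborel. (?f \<omega> z)\<^sup>2) = exp (s\<^sup>2 * (real n * \<tau>)) * (LINT z:phase_dom|lborel. (f0 z)\<^sup>2)"
    by (simp add: e_def)
qed

end


theorem proposition5p2:
  fixes M :: "'w measure" and K :: nat and \<beta> :: "nat \<Rightarrow> real \<Rightarrow> 'w \<Rightarrow> real"
    and E :: "real^'d \<Rightarrow> real^'d" and \<sigma> :: "nat \<Rightarrow> (real^'d) \<times> (real^'d) \<Rightarrow> real"
    and f0 :: "(real^'d) \<times> (real^'d) \<Rightarrow> real" and \<tau> :: real
  assumes W: "indep_wiener M K \<beta>"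
    and E_per: "periodic_torus E" and E_smooth: "smooth_map E"
    and \<sigma>_per: "\<And>k. k < K \<Longrightarrow> periodic_x (\<sigma> k)"
    and \<sigma>_bdd: "\<And>k. k < K \<Longrightarrow> bounded (range (\<sigma> k))"
    and \<sigma>_smooth: "\<And>k. k < K \<Longrightarrow> smooth_map (\<sigma> k)"
    and f0_per: "periodic_x f0"
    and \<tau>: "0 < \<tau>" "\<tau> < 1"
  shows
    "((\<forall>z. 0 \<le> f0 z) \<longrightarrow>
        (AE \<omega> in M. \<forall>n z. 0 \<le> fmI \<tau> E K \<sigma> \<beta> f0 n \<omega> z))
     \<and> (set_integrable lborel phase_dom f0 \<longrightarrow>
        (AE \<omega> in M. \<forall>n. set_integrable lborel phase_dom (fmI \<tau> E K \<sigma> \<beta> f0 n \<omega>)) \<and>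
        (\<forall>n. (LINT z:phase_dom|lborel. integral\<^sup>L M (\<lambda>\<omega>. fmI \<tau> E K \<sigma> \<beta> f0 n \<omega> z))
             = (LINT z:phase_dom|lborel. f0 z)))
     \<and> (\<forall>s::real. (set_integrable lborel phase_dom (\<lambda>z. (f0 z)\<^sup>2) \<and> set_borel_measurable lborel phase_dom f0
          \<and> (\<forall>z. (\<Sum>k<K. (\<sigma> k z)\<^sup>2) = s\<^sup>2)) \<longrightarrow>
        (\<forall>n. integrable (M \<Otimes>\<^sub>M lborel)
               (\<lambda>(\<omega>, z). indicator phase_dom z * (fmI \<tau> E K \<sigma> \<beta> f0 n \<omega> z)\<^sup>2) \<and>
             (\<lambda>(\<omega>, z). indicator phase_dom z * fmI \<tau> E K \<sigma> \<beta> f0 n \<omega> z) \<in> borel_measurable (M \<Otimes>\<^sub>M lborel) \<and>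
             integral\<^sup>L M (\<lambda>\<omega>. LINT z:phase_dom|lborel. (fmI \<tau> E K \<sigma> \<beta> f0 n \<omega> z)\<^sup>2)
               = exp (s\<^sup>2 * (real n * \<tau>)) * (LINT z:phase_dom|lborel. (f0 z)\<^sup>2)))"
  proof -
  have Em: "E \<in> borel_measurable borel"
    using smooth_cont[OF E_smooth] by (rule borel_measurable_continuous_onI)
  have \<sigma>m: "\<sigma> k \<in> borel_measurable borel" if "k < K" for k
    using smooth_cont[OF \<sigma>_smooth[OF that]] by (rule borel_measurable_continuous_onI)
  have P1: "(\<forall>z. 0 \<le> f0 z) \<longrightarrow> (AE \<omega> in M. \<forall>n z. 0 \<le> fmI \<tau> E K \<sigma> \<beta> f0 n \<omega> z)"
  proof (intro impI AE_I2 allI)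
    fix \<omega> n z assume "\<forall>z. 0 \<le> f0 z"
    then have h: "0 \<le> f0 ((Phi \<tau> E ^^ n) z)" by blast
    show "0 \<le> fmI \<tau> E K \<sigma> \<beta> f0 n \<omega> z"
      unfolding fmI_unroll using h by (intro mult_nonneg_nonneg prod_nonneg) auto
  qed
  have P2: "set_integrable lborel phase_dom f0 \<longrightarrow>
        (AE \<omega> in M. \<forall>n. set_integrable lborel phase_dom (fmI \<tau> E K \<sigma> \<beta> f0 n \<omega>)) \<and>
        (\<forall>n. (LINT z:phase_dom|lborel. integral\<^sup>L M (\<lambda>\<omega>. fmI \<tau> E K \<sigma> \<beta> f0 n \<omega> z))
             = (LINT z:phase_dom|lborel. f0 z))"
  proof (intro impI conjI)
    assume f0i: "set_integrable lborel phase_dom f0"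
    have "set_borel_measurable lborel phase_dom f0"
      using f0i unfolding set_integrable_def set_borel_measurable_def by (rule borel_measurable_integrable)
    then have f0m: "f0 \<in> borel_measurable borel" by (rule periodic_measurable[OF f0_per])
    show "AE \<omega> in M. \<forall>n. set_integrable lborel phase_dom (fmI \<tau> E K \<sigma> \<beta> f0 n \<omega>)"
      by (intro AE_I2 allI part2_int[OF W Em E_per \<sigma>m \<sigma>_bdd f0m f0_per \<tau>(1) f0i]) auto
    show "\<forall>n. (LINT z:phase_dom|lborel. integral\<^sup>L M (\<lambda>\<omega>. fmI \<tau> E K \<sigma> \<beta> f0 n \<omega> z))
             = (LINT z:phase_dom|lborel. f0 z)"
      using part2_mass[OF W Em E_per \<sigma>m \<sigma>_bdd f0m f0_per \<tau>(1) f0i] by auto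
  qed
  have P3: "\<forall>s::real. (set_integrable lborel phase_dom (\<lambda>z. (f0 z)\<^sup>2) \<and> set_borel_measurable lborel phase_dom f0
          \<and> (\<forall>z. (\<Sum>k<K. (\<sigma> k z)\<^sup>2) = s\<^sup>2)) \<longrightarrow>
        (\<forall>n. integrable (M \<Otimes>\<^sub>M lborel)
               (\<lambda>(\<omega>, z). indicator phase_dom z * (fmI \<tau> E K \<sigma> \<beta> f0 n \<omega> z)\<^sup>2) \<and>
             (\<lambda>(\<omega>, z). indicator phase_dom z * fmI \<tau> E K \<sigma> \<beta> f0 n \<omega> z) \<in> borel_measurable (M \<Otimes>\<^sub>M lborel) \<and>
             integral\<^sup>L M (\<lambda>\<omega>. LINT z:phase_dom|lborel. (fmI \<tau> E K \<sigma> \<beta> f0 n \<omega> z)\<^sup>2)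
               = exp (s\<^sup>2 * (real n * \<tau>)) * (LINT z:phase_dom|lborel. (f0 z)\<^sup>2))"
  proof (intro allI impI)
    fix s :: real and n
    assume a: "set_integrable lborel phase_dom (\<lambda>z. (f0 z)\<^sup>2) \<and> set_borel_measurable lborel phase_dom f0
          \<and> (\<forall>z. (\<Sum>k<K. (\<sigma> k z)\<^sup>2) = s\<^sup>2)"
    then have f0m: "f0 \<in> borel_measurable borel" using periodic_measurable[OF f0_per] by blast
    have s: "\<And>z. (\<Sum>k<K. (\<sigma> k z)\<^sup>2) = s\<^sup>2" using a by blast
    have f0i2: "set_integrable lborel phase_dom (\<lambda>z. (f0 z)\<^sup>2)" using a by blast
    note p3 = part3[OF W Em E_per \<sigma>m \<sigma>_bdd f0m f0_per \<tau>(1) s f0i2, where n=n]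
    show "integrable (M \<Otimes>\<^sub>M lborel)
               (\<lambda>(\<omega>, z). indicator phase_dom z * (fmI \<tau> E K \<sigma> \<beta> f0 n \<omega> z)\<^sup>2) \<and>
             (\<lambda>(\<omega>, z). indicator phase_dom z * fmI \<tau> E K \<sigma> \<beta> f0 n \<omega> z) \<in> borel_measurable (M \<Otimes>\<^sub>M lborel) \<and>
             integral\<^sup>L M (\<lambda>\<omega>. LINT z:phase_dom|lborel. (fmI \<tau> E K \<sigma> \<beta> f0 n \<omega> z)\<^sup>2)
               = exp (s\<^sup>2 * (real n * \<tau>)) * (LINT z:phase_dom|lborel. (f0 z)\<^sup>2)"
      using p3 by blast
  qed
  show ?thesis using P1 P2 P3 by blast
qed

end
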